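(* Let $X$ and $Y$ be random variables with $X\ge0$ and $Y\ge1$. Then for every $p>1$, $$\mathbb{E}\,X\log Y\le(\mathbb{E}X^p)^{1/p}\left(\log\mathbb{E}Y+\frac{1}{p-1}\right).$$
   Context: $\log$ denotes the natural logarithm. *)

theory Defs
  imports "HOL-Probability.Probability"
begin

end

theory Submission
  imports Defs
begin
lemma young:
  fixes u v p q :: real
  assumes u: "u \<ge> 0" and v: "v \<ge> 0" and p: "p > 1" and q: "q = p/(p-1)"
  shows "u * v \<le> u powr p / p + v powr q / q"
proof (cases "u = 0 \<or> v = 0")
  case True
  then show ?thesis using p q by auto
next
  case False
  then have up: "u > 0" and vp: "v > 0" using u v by auto
  have q1: "q > 1" using p unfolding q by (simp add: less_divide_eq)
  have t: "1 - 1/q = 1/p" using p unfolding q by (simp add: field_simps)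
  have "exp ((1 - 1/q) *\<^sub>R (p * ln u) + (1/q) *\<^sub>R (q * ln v))
     \<le> (1 - 1/q) * exp (p * ln u) + (1/q) * exp (q * ln v)"
    using convex_onD[OF exp_convex, of "1/q" "p * ln u" "q * ln v"] q1 by auto
  moreover have "(1 - 1/q) *\<^sub>R (p * ln u) + (1/q) *\<^sub>R (q * ln v) = ln u + ln v"
    using t p q1 by simp
  ultimately have "exp (ln u + ln v) \<le> (1/p) * exp (p * ln u) + (1/q) * exp (q * ln v)"
    using t by simp
  then show ?thesis using up vp by (simp add: exp_add powr_def mult.commute)
qed

lemma gprime_anti:
  fixes c x y :: real
  assumes c: "c > 0" and x: "1 \<le> x" and xy: "x \<le> y"
  shows "(ln y + c) powr c / y \<le> (ln x + c) powr c / x"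
proof -
  have "\<exists>d. DERIV (\<lambda>t. (ln t + c) powr c / t) t :> d \<and> d \<le> 0" if t: "x \<le> t" "t \<le> y" for t
  proof -
    have t1: "t \<ge> 1" using t x by auto
    have lnt: "ln t \<ge> 0" using t1 by simp
    have L: "ln t + c > 0" using lnt c by linarith
    have D1: "DERIV (\<lambda>t. ln t + c) t :> 1/t" using t1 by (auto intro!: derivative_eq_intros)
    have D2: "DERIV (\<lambda>t. (ln t + c) powr c) t :> c * (ln t + c) powr (c - of_nat 1) * (1/t)"
      by (rule DERIV_fun_powr[OF D1 L])
    have D3: "DERIV (\<lambda>t. (ln t + c) powr c / t) t :>
       ((c * (ln t + c) powr (c - 1) * (1/t)) * t - (ln t + c) powr c * 1) / (t * t)"
      using DERIV_divide[OF D2 DERIV_ident] t1 by simp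
    have "(ln t + c) powr c = (ln t + c) powr (c - 1) * (ln t + c)"
      using L by (simp add: powr_diff)
    then have "(c * (ln t + c) powr (c - 1) * (1/t)) * t - (ln t + c) powr c * 1
        = (ln t + c) powr (c - 1) * (c - (ln t + c))" using t1 by (simp add: algebra_simps)
    also have "\<dots> \<le> 0" using lnt by (intro mult_nonneg_nonpos) auto
    finally show ?thesis using D3 t1
      by (intro exI[of _ "((c * (ln t + c) powr (c - 1) * (1/t)) * t - (ln t + c) powr c * 1) / (t * t)"])
         (auto intro: divide_nonpos_pos)
  qed
  from DERIV_nonpos_imp_nonincreasing[OF xy this] show ?thesis by simp
qed

lemma tangent:
  fixes c q y m :: real
  assumes c: "c > 0" and q: "q = 1 + c" and y: "1 \<le> y" and m: "1 \<le> m"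
  shows "(ln y + c) powr q \<le> (ln m + c) powr q + q * ((ln m + c) powr c / m) * (y - m)"
proof -
  have D: "DERIV (\<lambda>t. (ln t + c) powr q) t :> q * ((ln t + c) powr c / t)" if "t \<ge> 1" for t
  proof -
    have L: "ln t + c > 0" using that c by (smt (verit) ln_ge_zero)
    have D1: "DERIV (\<lambda>t. ln t + c) t :> 1/t" using that by (auto intro!: derivative_eq_intros)
    show ?thesis using DERIV_fun_powr[OF D1 L, of q] q by simp
  qed
  consider "y < m" | "y = m" | "m < y" by linarith
  then show ?thesis
  proof cases
    case 1
    obtain z where z: "y < z" "z < m" and e: "(ln m + c) powr q - (ln y + c) powr q = (m - y) * (q * ((ln z + c) powr c / z))"
      using MVT2[OF 1, of "\<lambda>t. (ln t + c) powr q" "\<lambda>t. q * ((ln t + c) powr c / t)"] D y by auto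
    have "(ln m + c) powr c / m \<le> (ln z + c) powr c / z" using gprime_anti[OF c, of z m] z y by auto
    then have "(m - y) * (q * ((ln m + c) powr c / m)) \<le> (m - y) * (q * ((ln z + c) powr c / z))"
      using z q c by (intro mult_left_mono) auto
    moreover have "q * ((ln m + c) powr c / m) * (y - m) = - ((m - y) * (q * ((ln m + c) powr c / m)))"
      using m by (simp add: field_simps)
    ultimately show ?thesis using e by (smt (verit))
  next
    case 2 then show ?thesis by simp
  next
    case 3
    obtain z where z: "m < z" "z < y" and e: "(ln y + c) powr q - (ln m + c) powr q = (y - m) * (q * ((ln z + c) powr c / z))"
      using MVT2[OF 3, of "\<lambda>t. (ln t + c) powr q" "\<lambda>t. q * ((ln t + c) powr c / t)"] D m by auto
    have "(ln z + c) powr c / z \<le> (ln m + c) powr c / m" using gprime_anti[OF c, of m z] z m by auto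
    then have "(y - m) * (q * ((ln z + c) powr c / z)) \<le> (y - m) * (q * ((ln m + c) powr c / m))"
      using z q c by (intro mult_left_mono) auto
    moreover have "q * ((ln m + c) powr c / m) * (y - m) = (y - m) * (q * ((ln m + c) powr c / m))"
      using m by (simp add: field_simps)
    ultimately show ?thesis using e by linarith
  qed
qed

theorem lemma1:
  fixes M :: "'a measure" and X Y :: "'a \<Rightarrow> real" and p :: real
  assumes "prob_space M"
    and "X \<in> borel_measurable M" and "Y \<in> borel_measurable M"
    and "AE \<omega> in M. X \<omega> \<ge> 0" and "AE \<omega> in M. Y \<omega> \<ge> 1"
    and "p > 1"
    and "integrable M (\<lambda>\<omega>. X \<omega> powr p)" and "integrable M Y"
  shows "integrable M (\<lambda>\<omega>. X \<omega> * ln (Y \<omega>)) \<and>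
    (\<integral>\<omega>. X \<omega> * ln (Y \<omega>) \<partial>M)
      \<le> (\<integral>\<omega>. X \<omega> powr p \<partial>M) powr (1 / p) * (ln (\<integral>\<omega>. Y \<omega> \<partial>M) + 1 / (p - 1))"
proof -
  interpret prob_space M by (rule assms(1))
  note Xm[measurable] = assms(2) and Ym[measurable] = assms(3)
  note X0 = assms(4) and Y1 = assms(5) and p = assms(6) and iXp = assms(7) and iY = assms(8)
  have meas: "(\<lambda>\<omega>. X \<omega> * ln (Y \<omega>)) \<in> borel_measurable M" by measurable
  define A where "A = (\<integral>\<omega>. X \<omega> powr p \<partial>M)"
  have A0: "A \<ge> 0" unfolding A_def by (rule integral_nonneg_AE) auto
  show ?thesis
  proof (cases "A = 0")
    case True
    then have "AE \<omega> in M. X \<omega> powr p = 0"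
      using integral_nonneg_eq_0_iff_AE[OF iXp] unfolding A_def by auto
    then have Z: "AE \<omega> in M. X \<omega> * ln (Y \<omega>) = 0" by eventually_elim simp
    have i: "integrable M (\<lambda>\<omega>. X \<omega> * ln (Y \<omega>))"
      using integrable_cong_AE[OF meas borel_measurable_const Z] by simp
    have "(\<integral>\<omega>. X \<omega> * ln (Y \<omega>) \<partial>M) = 0"
      using integral_cong_AE[OF meas borel_measurable_const Z] by simp
    then show ?thesis using i True unfolding A_def by simp
  next
    case False
    then have Ap: "A > 0" using A0 by simp
    define a where "a = A powr (1/p)"
    have ap: "a > 0" unfolding a_def using Ap by simp
    have aA: "a powr p = A" unfolding a_def using Ap p by (simp add: powr_powr)
    define m where "m = (\<integral>\<omega>. Y \<omega> \<partial>M)"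
    have m1: "m \<ge> 1" unfolding m_def by (rule integral_ge_const[OF iY Y1])
    define c where "c = 1 / (p - 1)"
    define q where "q = p / (p - 1)"
    have cp: "c > 0" unfolding c_def using p by simp
    have qc: "q = 1 + c" unfolding q_def c_def using p by (simp add: field_simps)
    define B where "B = ln m + c"
    have Bp: "B > 0" unfolding B_def using m1 cp by (smt (verit) ln_ge_zero)
    define K where "K = q * ((ln m + c) powr c / m)"
    define \<alpha> where "\<alpha> = a * B / (A * p)"
    define \<beta> where "\<beta> = a * B * K / (q * B powr q)"
    define \<gamma> where "\<gamma> = a * B * (B powr q - K * m) / (q * B powr q)"
    have ptw: "X \<omega> * ln (Y \<omega>) \<le> \<alpha> * X \<omega> powr p + \<beta> * Y \<omega> + \<gamma>"
      if x0: "X \<omega> \<ge> 0" and y1: "Y \<omega> \<ge> 1" for \<omega>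
    proof -
      define u where "u = X \<omega> / a"
      define v where "v = ln (Y \<omega>) / B"
      have u0: "u \<ge> 0" unfolding u_def using x0 ap by simp
      have v0: "v \<ge> 0" unfolding v_def using y1 Bp by simp
      have Y: "u * v \<le> u powr p / p + v powr q / q"
        by (rule young[OF u0 v0 p q_def])
      have up: "u powr p = X \<omega> powr p / A"
        unfolding u_def using x0 ap aA by (simp add: powr_divide)
      have "v powr q = ln (Y \<omega>) powr q / B powr q"
        unfolding v_def using y1 Bp by (simp add: powr_divide)
      also have "\<dots> \<le> (ln (Y \<omega>) + c) powr q / B powr q"
        using y1 cp Bp qc by (intro divide_right_mono powr_mono2) auto
      also have "\<dots> \<le> (B powr q + K * (Y \<omega> - m)) / B powr q"
        using tangent[OF cp qc y1 m1] unfolding B_def K_def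
        by (intro divide_right_mono) (auto simp: mult.assoc)
      finally have vq: "v powr q \<le> (B powr q + K * (Y \<omega> - m)) / B powr q" .
      have q0: "q > 0" using qc cp by simp
      have "X \<omega> * ln (Y \<omega>) = a * B * (u * v)"
        unfolding u_def v_def using ap Bp by simp
      also have "\<dots> \<le> a * B * (u powr p / p + v powr q / q)"
        using Y ap Bp by (intro mult_left_mono) auto
      also have "\<dots> \<le> a * B * (X \<omega> powr p / A / p + (B powr q + K * (Y \<omega> - m)) / B powr q / q)"
        unfolding up using vq ap Bp q0 by (intro mult_left_mono add_left_mono divide_right_mono) auto
      also have "\<dots> = \<alpha> * X \<omega> powr p + \<beta> * Y \<omega> + \<gamma>"
        unfolding \<alpha>_def \<beta>_def \<gamma>_def using Ap Bp q0 p
        by (simp add: field_simps)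
      finally show ?thesis .
    qed
    have iR: "integrable M (\<lambda>\<omega>. \<alpha> * X \<omega> powr p + \<beta> * Y \<omega> + \<gamma>)"
      using iXp iY by auto
    have AEle: "AE \<omega> in M. X \<omega> * ln (Y \<omega>) \<le> \<alpha> * X \<omega> powr p + \<beta> * Y \<omega> + \<gamma>"
      using X0 Y1 by eventually_elim (rule ptw)
    have AEn: "AE \<omega> in M. norm (X \<omega> * ln (Y \<omega>)) \<le> norm (\<alpha> * X \<omega> powr p + \<beta> * Y \<omega> + \<gamma>)"
      using X0 Y1 AEle by eventually_elim auto
    have iL: "integrable M (\<lambda>\<omega>. X \<omega> * ln (Y \<omega>))"
      by (rule Bochner_Integration.integrable_bound[OF iR meas AEn])
    have "(\<integral>\<omega>. X \<omega> * ln (Y \<omega>) \<partial>M) \<le> (\<integral>\<omega>. \<alpha> * X \<omega> powr p + \<beta> * Y \<omega> + \<gamma> \<partial>M)"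
      by (rule integral_mono_AE[OF iL iR AEle])
    also have "\<dots> = \<alpha> * A + \<beta> * m + \<gamma>"
      unfolding A_def m_def using iXp iY prob_space by simp
    also have "\<dots> = a * B"
    proof -
      have q0: "q > 0" using qc cp by simp
      have Bq: "B powr q > 0" using Bp by simp
      have "1 / p + 1 / q = 1" unfolding q_def using p by (simp add: field_simps)
      then show ?thesis unfolding \<alpha>_def \<beta>_def \<gamma>_def using Ap Bq q0 p
        apply (simp add: field_simps) by algebra
    qed
    finally show ?thesis using iL unfolding a_def B_def c_def m_def A_def by simp
  qed
qed
end
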